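(* In the setting of the context, let $(\sigma_t,\sigma'_t)_{t\ge0}$ be the monotone coupling started at $(\sigma,\sigma')$. Then for all $t\ge0$, \[ \mathbb E\sum_{i=1}^ma_i\,\mathrm{dist}(\sigma_t^{(i)},\sigma_t'^{(i)})\le\rho_n^t\sum_{i=1}^ma_i\,\mathrm{dist}(\sigma^{(i)},\sigma'^{(i)}), \] and, for each $1\le i\le m$, $\mathbb E\,\mathrm{dist}(\sigma_t^{(i)},\sigma_t'^{(i)})\le n\sqrt{p_i}\,\rho_n^t$.
   Context: Fix $m\ge1$, proportions $p_1,\dots,p_m>0$ with $\sum_ip_i=1$, a symmetric matrix $\mathbf K=(k_{ij})$ with all $k_{ij}>0$, and $\beta\ge0$; $n$ is a positive integer with $np_i\in\mathbb N$. The vertex set $V=\{1,\dots,n\}$ is partitioned into blocks $G_1,\dots,G_m$ with $|G_i|=np_i$; for $v\in G_i,w\in G_j$ put $K(v,w)=k_{ij}/n$. For $\sigma\in\Omega=\{-1,+1\}^V$ let $S^v(\sigma)=\sum_{w\ne v}K(v,w)\sigma(w)$ and $r_+(s)=\frac{1+\tanh(\beta s)}2$. The monotone coupling is the grand coupling of Glauber dynamics in which at each step a vertex $I$ uniform on $V$ and an independent $U$ uniform on $[0,1]$ are drawn (shared by all chains), and each chain in state $\sigma$ sets the spin at $I$ to $+1$ if $U\le r_+(S^I(\sigma))$ and to $-1$ otherwise. $\mathrm{dist}(\sigma^{(i)},\sigma'^{(i)})$ is the number of vertices of $G_i$ at which $\sigma,\sigma'$ differ. Let $\mathbf B=(p_ik_{ij})$,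 $\mathbf Q_n=(1-\frac1n)\mathbf I_m+\frac\beta n\mathbf B$, $\rho_n$ its largest (Perron) eigenvalue and $\mathbf a=(a_1,\dots,a_m)^\top>0$ its left Perron eigenvector normalized by $\|\mathbf a\|_1=1$. *)

theory Defs
  imports "HOL-Analysis.Analysis" "Jordan_Normal_Form.Char_Poly"
begin

text \<open>Vertices are 1..n; blocks are indexed 0..m-1; blk v is the block of vertex v.
  Spin configurations are functions nat => int (only values on 1..n matter).\<close>

definition Kint :: "nat \<Rightarrow> (nat \<Rightarrow> nat) \<Rightarrow> (nat \<Rightarrow> nat \<Rightarrow> real) \<Rightarrow> nat \<Rightarrow> nat \<Rightarrow> real" where
  "Kint n blk k v w = k (blk v) (blk w) / real n"

definition Sfield :: "nat \<Rightarrow> (nat \<Rightarrow> nat) \<Rightarrow> (nat \<Rightarrow> nat \<Rightarrow> real) \<Rightarrow> (nat \<Rightarrow> int) \<Rightarrow> nat \<Rightarrow> real" where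
  "Sfield n blk k \<sigma> v = (\<Sum>w\<in>{1..n} - {v}. Kint n blk k v w * real_of_int (\<sigma> w))"

definition rplus :: "real \<Rightarrow> real \<Rightarrow> real" where
  "rplus \<beta> s = (1 + tanh (\<beta> * s)) / 2"

definition glauber_upd ::
  "nat \<Rightarrow> (nat \<Rightarrow> nat) \<Rightarrow> (nat \<Rightarrow> nat \<Rightarrow> real) \<Rightarrow> real \<Rightarrow> (nat \<Rightarrow> int) \<Rightarrow> nat \<Rightarrow> real \<Rightarrow> (nat \<Rightarrow> int)" where
  "glauber_upd n blk k \<beta> \<sigma> v u =
     \<sigma>(v := (if u \<le> rplus \<beta> (Sfield n blk k \<sigma> v) then 1 else -1))"

text \<open>coup_E ... t f sigma sigma' is the expectation of f(sigma_t, sigma'_t) for the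
  monotone (grand) coupling started at (sigma, sigma'): at each step a vertex I uniform on
  {1..n} and an independent U uniform on [0,1] are drawn and shared by both chains.
  Defined via the Markov property (first-step decomposition).\<close>
fun coup_E ::
  "nat \<Rightarrow> (nat \<Rightarrow> nat) \<Rightarrow> (nat \<Rightarrow> nat \<Rightarrow> real) \<Rightarrow> real \<Rightarrow> nat \<Rightarrow>
   ((nat \<Rightarrow> int) \<Rightarrow> (nat \<Rightarrow> int) \<Rightarrow> real) \<Rightarrow> (nat \<Rightarrow> int) \<Rightarrow> (nat \<Rightarrow> int) \<Rightarrow> real" where
  "coup_E n blk k \<beta> 0 f \<sigma> \<sigma>' = f \<sigma> \<sigma>'"
| "coup_E n blk k \<beta> (Suc t) f \<sigma> \<sigma>' =
     (\<Sum>v\<in>{1..n}. integral {0..1::real}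
        (\<lambda>u. coup_E n blk k \<beta> t f (glauber_upd n blk k \<beta> \<sigma> v u) (glauber_upd n blk k \<beta> \<sigma>' v u)))
     / real n"

definition blk_dist :: "nat \<Rightarrow> (nat \<Rightarrow> nat) \<Rightarrow> nat \<Rightarrow> (nat \<Rightarrow> int) \<Rightarrow> (nat \<Rightarrow> int) \<Rightarrow> nat" where
  "blk_dist n blk i \<sigma> \<sigma>' = card {v\<in>{1..n}. blk v = i \<and> \<sigma> v \<noteq> \<sigma>' v}"

definition Bmat :: "nat \<Rightarrow> (nat \<Rightarrow> real) \<Rightarrow> (nat \<Rightarrow> nat \<Rightarrow> real) \<Rightarrow> real mat" where
  "Bmat m p k = mat m m (\<lambda>(i, j). p i * k i j)"

definition Qmat :: "nat \<Rightarrow> nat \<Rightarrow> (nat \<Rightarrow> real) \<Rightarrow> (nat \<Rightarrow> nat \<Rightarrow> real) \<Rightarrow> real \<Rightarrow> real mat" where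
  "Qmat m n p k \<beta> = (1 - 1 / real n) \<cdot>\<^sub>m 1\<^sub>m m + (\<beta> / real n) \<cdot>\<^sub>m Bmat m p k"

end

theory Submission
  imports Defs
begin

lemma tanh_lip_aux:
  fixes x y :: real assumes "x \<le> y"
  shows "tanh y - tanh x \<le> y - x"
proof -
  have "(\<lambda>z. tanh z - z) x \<ge> (\<lambda>z. tanh z - z) y"
  proof (rule DERIV_nonpos_imp_nonincreasing[OF assms])
    fix z :: real
    have "((\<lambda>z. tanh z - z) has_real_derivative (1 - tanh z ^ 2 - 1)) (at z)"
      by (auto intro!: derivative_eq_intros)
    then show "\<exists>d. ((\<lambda>z. tanh z - z) has_real_derivative d) (at z) \<and> d \<le> 0" by fastforce
  qed
  then show ?thesis by simp
qed

lemma tanh_lip: "\<bar>tanh (x::real) - tanh y\<bar> \<le> \<bar>x - y\<bar>"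
proof (cases "x \<le> y")
  case True
  then show ?thesis using tanh_lip_aux[OF True] by (simp add: abs_if)
next
  case False
  then have "y \<le> x" by simp
  then show ?thesis using tanh_lip_aux[OF \<open>y \<le> x\<close>] by (simp add: abs_if)
qed

lemma rplus_bounds: "0 \<le> rplus b s" "rplus b s \<le> 1"
  using tanh_real_bounds[of "b * s"] by (auto simp: rplus_def)

lemma rplus_lip: assumes "b \<ge> 0" shows "\<bar>rplus b s - rplus b s' \<bar> \<le> b * \<bar>s - s' \<bar> / 2"
proof -
  have e: "rplus b s - rplus b s' = (tanh (b * s) - tanh (b * s')) / 2"
    by (simp add: rplus_def field_simps)
  have "\<bar>rplus b s - rplus b s' \<bar> = \<bar>tanh (b * s) - tanh (b * s')\<bar> / 2"
    unfolding e by simp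
  also have "\<dots> \<le> \<bar>b * s - b * s'\<bar> / 2" using tanh_lip by (intro divide_right_mono) auto
  also have "\<bar>b * s - b * s'\<bar> = b * \<bar>s - s' \<bar>" using assms
    by (simp add: right_diff_distrib[symmetric] abs_mult)
  finally show ?thesis .
qed

lemma int_step:
  fixes F :: "bool \<Rightarrow> bool \<Rightarrow> real" and a b :: real
  assumes "0 \<le> a" "a \<le> b" "b \<le> 1"
  shows "((\<lambda>u. F (u \<le> a) (u \<le> b)) has_integral
           (F True True * a + F False True * (b - a) + F False False * (1 - b))) {0..1}"
proof -
  have 1: "((\<lambda>u. F (u \<le> a) (u \<le> b)) has_integral (F True True * a)) {0..a}"
    apply (rule has_integral_spike_finite[where S="{}" and f="\<lambda>u. F True True"])
    using assms has_integral_const_real[of "F True True" 0 a] by (auto simp: mult.commute)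
  have 2: "((\<lambda>u. F (u \<le> a) (u \<le> b)) has_integral (F False True * (b - a))) {a..b}"
    apply (rule has_integral_spike_finite[where S="{a}" and f="\<lambda>u. F False True"])
    using assms has_integral_const_real[of "F False True" a b] by (auto simp: mult.commute)
  have 3: "((\<lambda>u. F (u \<le> a) (u \<le> b)) has_integral (F False False * (1 - b))) {b..1}"
    apply (rule has_integral_spike_finite[where S="{b}" and f="\<lambda>u. F False False"])
    using assms has_integral_const_real[of "F False False" b 1] by (auto simp: mult.commute)
  have "((\<lambda>u. F (u \<le> a) (u \<le> b)) has_integral (F True True * a + F False True * (b - a))) {0..b}"
    using has_integral_combine[OF assms(1,2) 1 2] .
  from has_integral_combine[OF _ assms(3) this 3] assms show ?thesis by simp
qed

definition W :: "(bool \<Rightarrow> bool \<Rightarrow> real) \<Rightarrow> real \<Rightarrow> real \<Rightarrow> real" where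
  "W F r1 r2 = F True True * min r1 r2 + F True False * max 0 (r1 - r2)
     + F False True * max 0 (r2 - r1) + F False False * (1 - max r1 r2)"

lemma int_W:
  fixes F :: "bool \<Rightarrow> bool \<Rightarrow> real"
  assumes "0 \<le> r1" "r1 \<le> 1" "0 \<le> r2" "r2 \<le> 1"
  shows "integral {0..1} (\<lambda>u. F (u \<le> r1) (u \<le> r2)) = W F r1 r2"
proof (cases "r1 \<le> r2")
  case True
  from int_step[OF assms(1) True assms(4), of F] True show ?thesis
    by (simp add: W_def integral_unique)
next
  case False
  then have le: "r2 \<le> r1" by simp
  from int_step[OF assms(3) le assms(2), of "\<lambda>x y. F y x"] False show ?thesis
    by (simp add: W_def integral_unique)
qed

lemma W_mono:
  assumes "0 \<le> r1" "r1 \<le> 1" "0 \<le> r2" "r2 \<le> 1" "\<And>x y. F x y \<le> G x y"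
  shows "W F r1 r2 \<le> W G r1 r2"
  unfolding W_def using assms
  by (intro add_mono mult_right_mono) auto

lemma W_lin:
  assumes "0 \<le> r1" "r1 \<le> 1" "0 \<le> r2" "r2 \<le> 1"
  shows "W (\<lambda>x y. A + B * (if x = y then 0 else 1)) r1 r2 = A + B * \<bar>r1 - r2\<bar>"
  unfolding W_def using assms by (cases "r1 \<le> r2") (auto simp: algebra_simps min_def max_def)

definition sg :: "bool \<Rightarrow> int" where "sg x = (if x then 1 else -1)"

lemma coup_E_Suc:
  "coup_E n blk k \<beta> (Suc t) f \<sigma> \<sigma>' =
    (\<Sum>v\<in>{1..n}. W (\<lambda>x y. coup_E n blk k \<beta> t f (\<sigma>(v := sg x)) (\<sigma>'(v := sg y)))
        (rplus \<beta> (Sfield n blk k \<sigma> v)) (rplus \<beta> (Sfield n blk k \<sigma>' v))) / real n"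
proof -
  have "integral {0..1::real}
        (\<lambda>u. coup_E n blk k \<beta> t f (glauber_upd n blk k \<beta> \<sigma> v u) (glauber_upd n blk k \<beta> \<sigma>' v u))
     = W (\<lambda>x y. coup_E n blk k \<beta> t f (\<sigma>(v := sg x)) (\<sigma>'(v := sg y)))
        (rplus \<beta> (Sfield n blk k \<sigma> v)) (rplus \<beta> (Sfield n blk k \<sigma>' v))" for v
    unfolding glauber_upd_def
    using int_W[OF rplus_bounds rplus_bounds, of "\<lambda>x y. coup_E n blk k \<beta> t f (\<sigma>(v := sg x)) (\<sigma>'(v := sg y))"
       \<beta> "Sfield n blk k \<sigma> v" \<beta> "Sfield n blk k \<sigma>' v"]
    by (simp add: sg_def)
  then show ?thesis by simp
qed

lemma coup_E_1:
  "coup_E n blk k \<beta> 1 f \<sigma> \<sigma>' =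
    (\<Sum>v\<in>{1..n}. W (\<lambda>x y. f (\<sigma>(v := sg x)) (\<sigma>'(v := sg y)))
        (rplus \<beta> (Sfield n blk k \<sigma> v)) (rplus \<beta> (Sfield n blk k \<sigma>' v))) / real n"
  using coup_E_Suc[of n blk k \<beta> 0 f \<sigma> \<sigma>'] by simp


definition valid :: "nat \<Rightarrow> (nat \<Rightarrow> int) \<Rightarrow> bool" where
  "valid n \<sigma> = (\<forall>v\<in>{1..n}. \<sigma> v \<in> {-1, 1})"

definition fc :: "nat \<Rightarrow> (nat \<Rightarrow> nat) \<Rightarrow> nat \<Rightarrow> (nat \<Rightarrow> real) \<Rightarrow> (nat \<Rightarrow> int) \<Rightarrow> (nat \<Rightarrow> int) \<Rightarrow> real" where
  "fc n blk m c s s' = (\<Sum>i<m. c i * real (blk_dist n blk i s s'))"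

definition Qe :: "nat \<Rightarrow> (nat \<Rightarrow> real) \<Rightarrow> (nat \<Rightarrow> nat \<Rightarrow> real) \<Rightarrow> real \<Rightarrow> nat \<Rightarrow> nat \<Rightarrow> real" where
  "Qe n p k \<beta> i j = (if i = j then 1 - 1 / real n else 0) + \<beta> / real n * (p i * k i j)"

definition qT :: "nat \<Rightarrow> nat \<Rightarrow> (nat \<Rightarrow> real) \<Rightarrow> (nat \<Rightarrow> nat \<Rightarrow> real) \<Rightarrow> real \<Rightarrow> (nat \<Rightarrow> real) \<Rightarrow> nat \<Rightarrow> real" where
  "qT n m p k \<beta> c j = (\<Sum>i<m. c i * Qe n p k \<beta> i j)"

lemma valid_upd: "valid n \<sigma> \<Longrightarrow> valid n (\<sigma>(v := sg x))"
  by (auto simp: valid_def sg_def)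

lemma card_upd:
  assumes "v \<in> {1..n}"
  shows "real (blk_dist n blk i (\<sigma>(v := X)) (\<sigma>'(v := Y))) =
    real (blk_dist n blk i \<sigma> \<sigma>') - (if blk v = i \<and> \<sigma> v \<noteq> \<sigma>' v then 1 else 0)
      + (if blk v = i \<and> X \<noteq> Y then 1 else 0)"
proof -
  define A where "A = {w\<in>{1..n}. blk w = i \<and> \<sigma> w \<noteq> \<sigma>' w}"
  define A' where "A' = {w\<in>{1..n}. blk w = i \<and> (\<sigma>(v := X)) w \<noteq> (\<sigma>'(v := Y)) w}"
  have eq: "A - {v} = A' - {v}" by (auto simp: A_def A'_def)
  have fA: "finite A" "finite A'" by (auto simp: A_def A'_def)
  have cA: "real (card A) = real (card (A - {v})) + (if v \<in> A then 1 else 0)"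
    using card.remove[OF fA(1), of v] by auto
  have cA': "real (card A') = real (card (A' - {v})) + (if v \<in> A' then 1 else 0)"
    using card.remove[OF fA(2), of v] by auto
  have "v \<in> A \<longleftrightarrow> blk v = i \<and> \<sigma> v \<noteq> \<sigma>' v" "v \<in> A' \<longleftrightarrow> blk v = i \<and> X \<noteq> Y"
    using assms by (auto simp: A_def A'_def)
  then show ?thesis using cA cA' eq unfolding blk_dist_def A_def[symmetric] A'_def[symmetric]
    by simp
qed

lemma group_blk:
  fixes n m :: nat and blk :: "nat \<Rightarrow> nat" and G :: "nat \<Rightarrow> real"
  assumes "\<forall>v\<in>{1..n}. blk v < m"
  shows "(\<Sum>v\<in>{1..n}. G (blk v) * (if P v then 1 else 0)) =
         (\<Sum>i<m. G i * real (card {v\<in>{1..n}. blk v = i \<and> P v}))"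
proof -
  have "(\<Sum>v\<in>{1..n}. G (blk v) * (if P v then 1 else 0)) =
        (\<Sum>i<m. \<Sum>v\<in>{x. x \<in> {1..n} \<and> blk x = i}. G (blk v) * (if P v then 1 else 0))"
    using assms by (intro sum.group[symmetric]) auto
  also have "\<dots> = (\<Sum>i<m. G i * real (card {v\<in>{1..n}. blk v = i \<and> P v}))"
  proof (rule sum.cong[OF refl])
    fix i
    have "(\<Sum>v\<in>{x. x \<in> {1..n} \<and> blk x = i}. G (blk v) * (if P v then 1 else 0))
       = (\<Sum>v\<in>{x. x \<in> {1..n} \<and> blk x = i}. if P v then G i else 0)"
      by (rule sum.cong) auto
    also have "\<dots> = (\<Sum>v\<in>{x \<in> {x. x \<in> {1..n} \<and> blk x = i}. P x}. G i)"
      by (rule sum.inter_filter[symmetric]) auto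
    also have "{x \<in> {x. x \<in> {1..n} \<and> blk x = i}. P x} = {v\<in>{1..n}. blk v = i \<and> P v}" by auto
    finally show "(\<Sum>v\<in>{x. x \<in> {1..n} \<and> blk x = i}. G (blk v) * (if P v then 1 else 0)) =
        G i * real (card {v\<in>{1..n}. blk v = i \<and> P v})" by simp
  qed
  finally show ?thesis .
qed

lemma sum_delta_blk:
  fixes c :: "nat \<Rightarrow> real"
  assumes "b < m"
  shows "(\<Sum>i<m. c i * (if b = i \<and> Q then 1 else 0)) = c b * (if Q then 1 else 0)"
proof -
  have "(\<Sum>i<m. c i * (if b = i \<and> Q then 1 else 0)) = (\<Sum>i<m. if i = b then c b * (if Q then 1 else 0) else 0)"
    by (rule sum.cong) auto
  then show ?thesis using assms by simp
qed

lemma fc_upd: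
  assumes "v \<in> {1..n}" "blk v < m"
  shows "fc n blk m c (\<sigma>(v := sg x)) (\<sigma>'(v := sg y)) =
     (fc n blk m c \<sigma> \<sigma>' - c (blk v) * (if \<sigma> v \<noteq> \<sigma>' v then 1 else 0)) + c (blk v) * (if x = y then 0 else 1)"
proof -
  have sgne: "sg x \<noteq> sg y \<longleftrightarrow> x \<noteq> y" by (auto simp: sg_def)
  have "fc n blk m c (\<sigma>(v := sg x)) (\<sigma>'(v := sg y)) =
    (\<Sum>i<m. c i * real (blk_dist n blk i \<sigma> \<sigma>') - c i * (if blk v = i \<and> \<sigma> v \<noteq> \<sigma>' v then 1 else 0)
      + c i * (if blk v = i \<and> sg x \<noteq> sg y then 1 else 0))"
    unfolding fc_def by (rule sum.cong[OF refl]) (simp add: card_upd[OF assms(1)] algebra_simps)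
  also have "\<dots> = fc n blk m c \<sigma> \<sigma>' - (\<Sum>i<m. c i * (if blk v = i \<and> \<sigma> v \<noteq> \<sigma>' v then 1 else 0))
      + (\<Sum>i<m. c i * (if blk v = i \<and> sg x \<noteq> sg y then 1 else 0))"
    by (simp add: sum.distrib sum_subtractf fc_def)
  also have "\<dots> = (fc n blk m c \<sigma> \<sigma>' - c (blk v) * (if \<sigma> v \<noteq> \<sigma>' v then 1 else 0)) + c (blk v) * (if x = y then 0 else 1)"
    unfolding sum_delta_blk[OF assms(2)] sgne by simp
  finally show ?thesis .
qed


lemma Sfield_diff:
  fixes n m :: nat and blk :: "nat \<Rightarrow> nat"
  assumes "n \<ge> 1" "\<forall>v\<in>{1..n}. blk v < m" "\<forall>i<m. \<forall>j<m. k i j > 0"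
    and "valid n \<sigma>" "valid n \<sigma>'" "v \<in> {1..n}"
  shows "\<bar>Sfield n blk k \<sigma> v - Sfield n blk k \<sigma>' v\<bar> \<le>
     2 / real n * (\<Sum>j<m. k (blk v) j * real (blk_dist n blk j \<sigma> \<sigma>'))"
proof -
  let ?d = "\<lambda>w. (if \<sigma> w \<noteq> \<sigma>' w then 1 else 0) :: real"
  have Kpos: "Kint n blk k v w \<ge> 0" if "w \<in> {1..n}" for w
    using assms that by (auto simp: Kint_def intro!: less_imp_le)
  have "Sfield n blk k \<sigma> v - Sfield n blk k \<sigma>' v =
      (\<Sum>w\<in>{1..n} - {v}. Kint n blk k v w * (real_of_int (\<sigma> w) - real_of_int (\<sigma>' w)))"
    by (simp add: Sfield_def sum_subtractf[symmetric] algebra_simps)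
  then have "\<bar>Sfield n blk k \<sigma> v - Sfield n blk k \<sigma>' v\<bar> \<le>
      (\<Sum>w\<in>{1..n} - {v}. \<bar>Kint n blk k v w * (real_of_int (\<sigma> w) - real_of_int (\<sigma>' w))\<bar>)"
    by (simp add: sum_abs)
  also have "\<dots> \<le> (\<Sum>w\<in>{1..n} - {v}. Kint n blk k v w * (2 * ?d w))"
  proof (rule sum_mono)
    fix w assume w: "w \<in> {1..n} - {v}"
    have "\<bar>real_of_int (\<sigma> w) - real_of_int (\<sigma>' w)\<bar> = 2 * ?d w"
    proof -
      have h1: "\<sigma> w = -1 \<or> \<sigma> w = 1" and h2: "\<sigma>' w = -1 \<or> \<sigma>' w = 1"
        using assms(4,5) w unfolding valid_def by auto
      from h1 h2 show ?thesis by (elim disjE) auto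
    qed
    then show "\<bar>Kint n blk k v w * (real_of_int (\<sigma> w) - real_of_int (\<sigma>' w))\<bar> \<le> Kint n blk k v w * (2 * ?d w)"
      using Kpos[of w] w by (simp add: abs_mult)
  qed
  also have "\<dots> \<le> (\<Sum>w\<in>{1..n}. Kint n blk k v w * (2 * ?d w))"
    by (rule sum_mono2) (use Kpos in auto)
  also have "\<dots> = 2 / real n * (\<Sum>w\<in>{1..n}. k (blk v) (blk w) * ?d w)"
    unfolding Kint_def sum_distrib_left by (rule sum.cong) auto
  also have "(\<Sum>w\<in>{1..n}. k (blk v) (blk w) * ?d w) = (\<Sum>j<m. k (blk v) j * real (blk_dist n blk j \<sigma> \<sigma>'))"
    unfolding blk_dist_def by (rule group_blk[OF assms(2)])
  finally show ?thesis .
qed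

lemma one_step:
  fixes n m :: nat and blk :: "nat \<Rightarrow> nat" and c p :: "nat \<Rightarrow> real"
  assumes "n \<ge> 1" "\<forall>v\<in>{1..n}. blk v < m" "\<forall>i<m. \<forall>j<m. k i j > 0" "\<beta> \<ge> 0"
    and card: "\<forall>i<m. real (card {v\<in>{1..n}. blk v = i}) = real n * p i"
    and "valid n \<sigma>" "valid n \<sigma>'" and cpos: "\<forall>i<m. c i \<ge> 0"
  shows "coup_E n blk k \<beta> 1 (fc n blk m c) \<sigma> \<sigma>' \<le> fc n blk m (qT n m p k \<beta> c) \<sigma> \<sigma>'"
proof -
  let ?D = "\<lambda>j. real (blk_dist n blk j \<sigma> \<sigma>')"
  let ?d = "\<lambda>w. (if \<sigma> w \<noteq> \<sigma>' w then 1 else 0) :: real"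
  let ?r = "\<lambda>v. rplus \<beta> (Sfield n blk k \<sigma> v)"
  let ?r' = "\<lambda>v. rplus \<beta> (Sfield n blk k \<sigma>' v)"
  let ?F = "fc n blk m c \<sigma> \<sigma>'"
  let ?H = "\<lambda>i. (\<Sum>j<m. k i j * ?D j)"
  have n0: "real n > 0" using assms(1) by simp
  have bv: "blk v < m" if "v \<in> {1..n}" for v using assms(2) that by auto
  have cb: "c (blk v) \<ge> 0" if "v \<in> {1..n}" for v using cpos bv[OF that] by auto
  have "coup_E n blk k \<beta> 1 (fc n blk m c) \<sigma> \<sigma>' =
     (\<Sum>v\<in>{1..n}. (?F - c (blk v) * ?d v) + c (blk v) * \<bar>?r v - ?r' v\<bar>) / real n"
    unfolding coup_E_1
  proof (rule arg_cong[where f="\<lambda>x. x / real n"], rule sum.cong[OF refl])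
    fix v assume v: "v \<in> {1..n}"
    show "W (\<lambda>x y. fc n blk m c (\<sigma>(v := sg x)) (\<sigma>'(v := sg y))) (?r v) (?r' v) =
          (?F - c (blk v) * ?d v) + c (blk v) * \<bar>?r v - ?r' v\<bar>"
      unfolding fc_upd[where v=v and n=n and blk=blk and m=m and c=c and \<sigma>=\<sigma> and \<sigma>'=\<sigma>', OF v bv[OF v]]
      by (rule W_lin[OF rplus_bounds rplus_bounds])
  qed
  also have "\<dots> = (real n * ?F - (\<Sum>v\<in>{1..n}. c (blk v) * ?d v)
       + (\<Sum>v\<in>{1..n}. c (blk v) * \<bar>?r v - ?r' v\<bar>)) / real n"
    by (simp add: sum.distrib sum_subtractf)
  also have "(\<Sum>v\<in>{1..n}. c (blk v) * ?d v) = ?F"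
    unfolding fc_def blk_dist_def by (rule group_blk[OF assms(2)])
  finally have e1: "coup_E n blk k \<beta> 1 (fc n blk m c) \<sigma> \<sigma>' = (real n * ?F - ?F
       + (\<Sum>v\<in>{1..n}. c (blk v) * \<bar>?r v - ?r' v\<bar>)) / real n" .
  have "(\<Sum>v\<in>{1..n}. c (blk v) * \<bar>?r v - ?r' v\<bar>) \<le>
      (\<Sum>v\<in>{1..n}. c (blk v) * (\<beta> / real n * ?H (blk v)) * (if True then 1 else 0))"
  proof (rule sum_mono)
    fix v assume v: "v \<in> {1..n}"
    have "\<bar>?r v - ?r' v\<bar> \<le> \<beta> * \<bar>Sfield n blk k \<sigma> v - Sfield n blk k \<sigma>' v\<bar> / 2"
      by (rule rplus_lip[OF assms(4)])
    also have "\<dots> \<le> \<beta> * (2 / real n * ?H (blk v)) / 2"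
      using Sfield_diff[OF assms(1,2,3,6,7) v] assms(4)
      by (intro divide_right_mono mult_left_mono) auto
    finally have rr: "\<bar>?r v - ?r' v\<bar> \<le> \<beta> / real n * ?H (blk v)" by simp
    then show "c (blk v) * \<bar>?r v - ?r' v\<bar> \<le> c (blk v) * (\<beta> / real n * ?H (blk v)) * (if True then 1 else 0)"
      using mult_left_mono[OF rr cb[OF v]] by simp
  qed
  also have "(\<Sum>v\<in>{1..n}. c (blk v) * (\<beta> / real n * ?H (blk v)) * (if True then 1 else 0))
      = (\<Sum>i<m. c i * (\<beta> / real n * ?H i) * real (card {v\<in>{1..n}. blk v = i \<and> True}))"
    by (rule group_blk[OF assms(2)])
  also have "\<dots> = (\<Sum>i<m. c i * (\<beta> / real n * ?H i) * (real n * p i))"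
    using card by (intro sum.cong) auto
  finally have e3: "(\<Sum>v\<in>{1..n}. c (blk v) * \<bar>?r v - ?r' v\<bar>) \<le> (\<Sum>i<m. c i * (\<beta> / real n * ?H i) * (real n * p i))" .
  have le: "coup_E n blk k \<beta> 1 (fc n blk m c) \<sigma> \<sigma>' \<le>
      (real n * ?F - ?F + (\<Sum>i<m. c i * (\<beta> / real n * ?H i) * (real n * p i))) / real n"
    unfolding e1 using n0 e3 by (intro divide_right_mono) auto
  have "fc n blk m (qT n m p k \<beta> c) \<sigma> \<sigma>' = (\<Sum>j<m. \<Sum>i<m. c i * Qe n p k \<beta> i j * ?D j)"
    unfolding fc_def qT_def by (simp add: sum_distrib_right)
  also have "\<dots> = (\<Sum>i<m. \<Sum>j<m. c i * Qe n p k \<beta> i j * ?D j)"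
    by (rule sum.swap)
  also have "\<dots> = (\<Sum>i<m. (1 - 1 / real n) * (c i * ?D i) + c i * (\<beta> / real n * p i * ?H i))"
  proof (rule sum.cong[OF refl])
    fix i assume i: "i \<in> {..<m}"
    have "(\<Sum>j<m. c i * Qe n p k \<beta> i j * ?D j) =
       (\<Sum>j<m. (if j = i then (1 - 1 / real n) * (c i * ?D i) else 0) + c i * (\<beta> / real n * p i) * (k i j * ?D j))"
      by (rule sum.cong[OF refl]) (auto simp: Qe_def algebra_simps)
    also have "\<dots> = (1 - 1 / real n) * (c i * ?D i) + c i * (\<beta> / real n * p i * ?H i)"
      using i by (simp add: sum.distrib sum_distrib_left sum_divide_distrib mult.assoc)
    finally show "(\<Sum>j<m. c i * Qe n p k \<beta> i j * ?D j) = (1 - 1 / real n) * (c i * ?D i) + c i * (\<beta> / real n * p i * ?H i)" .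
  qed
  also have "\<dots> = (1 - 1 / real n) * ?F + (\<Sum>i<m. c i * (\<beta> / real n * p i * ?H i))"
    by (simp add: sum.distrib fc_def sum_distrib_left)
  finally have eq: "fc n blk m (qT n m p k \<beta> c) \<sigma> \<sigma>' =
     (1 - 1 / real n) * ?F + (\<Sum>i<m. c i * (\<beta> / real n * p i * ?H i))" .
  have "(real n * ?F - ?F + (\<Sum>i<m. c i * (\<beta> / real n * ?H i) * (real n * p i))) / real n
      = (1 - 1 / real n) * ?F + (\<Sum>i<m. c i * (\<beta> / real n * ?H i) * (real n * p i)) / real n"
    using n0 by (simp add: field_simps)
  also have "(\<Sum>i<m. c i * (\<beta> / real n * ?H i) * (real n * p i)) / real n = (\<Sum>i<m. c i * (\<beta> / real n * p i * ?H i))"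
    unfolding sum_divide_distrib using n0 by (intro sum.cong) (auto simp: field_simps)
  finally show ?thesis using le eq by simp
qed


lemma eig_extract:
  fixes a :: "real vec"
  assumes "a \<in> carrier_vec m" "transpose_mat (Qmat m n p k \<beta>) *\<^sub>v a = \<rho> \<cdot>\<^sub>v a" "j < m"
  shows "(\<Sum>i<m. a $ i * Qe n p k \<beta> i j) = \<rho> * a $ j"
proof -
  have "(transpose_mat (Qmat m n p k \<beta>) *\<^sub>v a) $ j = (\<rho> \<cdot>\<^sub>v a) $ j" using assms(2) by simp
  then have "(\<Sum>i = 0..<m. Qmat m n p k \<beta> $$ (i, j) * a $ i) = \<rho> * a $ j"
    using assms(1,3) by (simp add: scalar_prod_def Qmat_def Bmat_def)
  moreover have "Qmat m n p k \<beta> $$ (i, j) = Qe n p k \<beta> i j" if "i < m" for i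
    using that assms(3) by (simp add: Qmat_def Bmat_def Qe_def)
  ultimately show ?thesis by (simp add: lessThan_atLeast0 mult.commute)
qed

lemma wcs:
  fixes w z :: "nat \<Rightarrow> real"
  assumes "\<forall>i\<in>I. w i \<ge> 0"
  shows "(\<Sum>i\<in>I. w i * z i)\<^sup>2 \<le> (\<Sum>i\<in>I. w i) * (\<Sum>i\<in>I. w i * (z i)\<^sup>2)"
proof -
  have "(\<Sum>i\<in>I. sqrt (w i) * (sqrt (w i) * z i))\<^sup>2 \<le> (\<Sum>i\<in>I. (sqrt (w i))\<^sup>2) * (\<Sum>i\<in>I. (sqrt (w i) * z i)\<^sup>2)"
    by (rule Cauchy_Schwarz_ineq_sum)
  moreover have "(\<Sum>i\<in>I. sqrt (w i) * (sqrt (w i) * z i)) = (\<Sum>i\<in>I. w i * z i)"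
    using assms by (intro sum.cong) (auto simp flip: mult.assoc)
  moreover have "(\<Sum>i\<in>I. (sqrt (w i))\<^sup>2) = (\<Sum>i\<in>I. w i)"
    using assms by (intro sum.cong) auto
  moreover have "(\<Sum>i\<in>I. (sqrt (w i) * z i)\<^sup>2) = (\<Sum>i\<in>I. w i * (z i)\<^sup>2)"
    using assms by (intro sum.cong) (auto simp: power_mult_distrib)
  ultimately show ?thesis by simp
qed

lemma Qe_nonneg:
  assumes "n \<ge> 1" "\<beta> \<ge> 0" "p i > 0" "k i j > 0"
  shows "Qe n p k \<beta> i j \<ge> 0"
proof -
  have "1 / real n \<le> 1" using assms(1) by simp
  then show ?thesis using assms unfolding Qe_def by (auto intro!: add_nonneg_nonneg mult_nonneg_nonneg)
qed

lemma qT_nonneg: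
  assumes "n \<ge> 1" "\<beta> \<ge> 0" "\<forall>i<m. p i > 0" "\<forall>i<m. \<forall>j<m. k i j > 0" "\<forall>i<m. c i \<ge> 0" "j < m"
  shows "qT n m p k \<beta> c j \<ge> 0"
  unfolding qT_def using assms by (intro sum_nonneg mult_nonneg_nonneg Qe_nonneg) auto

lemma qT_pow_nonneg:
  assumes "n \<ge> 1" "\<beta> \<ge> 0" "\<forall>i<m. p i > 0" "\<forall>i<m. \<forall>j<m. k i j > 0" "\<forall>i<m. c i \<ge> 0"
  shows "\<forall>j<m. (qT n m p k \<beta> ^^ t) c j \<ge> 0"
  by (induction t) (use assms qT_nonneg[OF assms(1-4)] in auto)

lemma main_ind:
  fixes n m :: nat and blk :: "nat \<Rightarrow> nat" and c p :: "nat \<Rightarrow> real"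
  assumes "n \<ge> 1" "\<forall>v\<in>{1..n}. blk v < m" "\<forall>i<m. \<forall>j<m. k i j > 0" "\<beta> \<ge> 0"
    and card: "\<forall>i<m. real (card {v\<in>{1..n}. blk v = i}) = real n * p i"
    and pp: "\<forall>i<m. p i > 0"
    and cpos: "\<forall>i<m. c i \<ge> 0"
  shows "valid n \<sigma> \<Longrightarrow> valid n \<sigma>' \<Longrightarrow>
     coup_E n blk k \<beta> t (fc n blk m c) \<sigma> \<sigma>' \<le> fc n blk m ((qT n m p k \<beta> ^^ t) c) \<sigma> \<sigma>'"
proof (induction t arbitrary: \<sigma> \<sigma>')
  case 0
  then show ?case by simp
next
  case (Suc t)
  let ?c = "(qT n m p k \<beta> ^^ t) c"
  have cn: "\<forall>i<m. ?c i \<ge> 0" using qT_pow_nonneg[OF assms(1,4) pp assms(3) cpos] by blast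
  have "coup_E n blk k \<beta> (Suc t) (fc n blk m c) \<sigma> \<sigma>' \<le>
    (\<Sum>v\<in>{1..n}. W (\<lambda>x y. fc n blk m ?c (\<sigma>(v := sg x)) (\<sigma>'(v := sg y)))
        (rplus \<beta> (Sfield n blk k \<sigma> v)) (rplus \<beta> (Sfield n blk k \<sigma>' v))) / real n"
    unfolding coup_E_Suc
    by (intro divide_right_mono sum_mono W_mono rplus_bounds Suc.IH valid_upd Suc.prems) auto
  also have "\<dots> = coup_E n blk k \<beta> 1 (fc n blk m ?c) \<sigma> \<sigma>'"
    unfolding coup_E_1 ..
  also have "\<dots> \<le> fc n blk m (qT n m p k \<beta> ?c) \<sigma> \<sigma>'"
    by (rule one_step[OF assms(1-4) card Suc.prems cn])
  finally show ?case by simp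
qed

definition Nq :: "nat \<Rightarrow> (nat \<Rightarrow> real) \<Rightarrow> (nat \<Rightarrow> real) \<Rightarrow> real" where
  "Nq m p c = (\<Sum>j<m. p j * (c j)\<^sup>2)"

lemma N_qT:
  fixes a :: "nat \<Rightarrow> real"
  assumes eig: "\<forall>j<m. (\<Sum>i<m. a i * Qe n p k \<beta> i j) = \<rho> * a j"
    and sym: "\<forall>i<m. \<forall>j<m. p j * Qe n p k \<beta> i j = p i * Qe n p k \<beta> j i"
    and Qn: "\<forall>i<m. \<forall>j<m. Qe n p k \<beta> i j \<ge> 0"
    and apos: "\<forall>i<m. a i > 0" and pp: "\<forall>i<m. p i > 0" and rho: "\<rho> \<ge> 0"
  shows "Nq m p (qT n m p k \<beta> c) \<le> \<rho>\<^sup>2 * Nq m p c"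
proof -
  let ?Q = "Qe n p k \<beta>"
  have step: "(qT n m p k \<beta> c j)\<^sup>2 \<le> \<rho> * a j * (\<Sum>i<m. ?Q i j * ((c i)\<^sup>2 / a i))" if j: "j < m" for j
  proof -
    have "qT n m p k \<beta> c j = (\<Sum>i<m. (a i * ?Q i j) * (c i / a i))"
      unfolding qT_def using apos by (intro sum.cong) (auto simp: field_simps)
    then have "(qT n m p k \<beta> c j)\<^sup>2 \<le> (\<Sum>i<m. a i * ?Q i j) * (\<Sum>i<m. (a i * ?Q i j) * (c i / a i)\<^sup>2)"
      using wcs[of "{..<m}" "\<lambda>i. a i * ?Q i j" "\<lambda>i. c i / a i"] apos Qn j
      by (simp add: less_imp_le)
    also have "(\<Sum>i<m. (a i * ?Q i j) * (c i / a i)\<^sup>2) = (\<Sum>i<m. ?Q i j * ((c i)\<^sup>2 / a i))"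
      using apos by (intro sum.cong) (auto simp: field_simps power2_eq_square)
    finally show ?thesis using eig j by simp
  qed
  have "Nq m p (qT n m p k \<beta> c) \<le> (\<Sum>j<m. p j * (\<rho> * a j * (\<Sum>i<m. ?Q i j * ((c i)\<^sup>2 / a i))))"
    unfolding Nq_def using step pp by (intro sum_mono mult_left_mono) (auto simp: less_imp_le)
  also have "\<dots> = \<rho> * (\<Sum>j<m. \<Sum>i<m. a j * (p j * ?Q i j) * ((c i)\<^sup>2 / a i))"
    by (simp add: sum_distrib_left sum_distrib_right mult_ac)
  also have "\<dots> = \<rho> * (\<Sum>i<m. \<Sum>j<m. a j * (p i * ?Q j i) * ((c i)\<^sup>2 / a i))"
    by (subst sum.swap) (use sym in \<open>auto intro!: sum.cong\<close>)
  also have "\<dots> = \<rho> * (\<Sum>i<m. p i * ((c i)\<^sup>2 / a i) * (\<Sum>j<m. a j * ?Q j i))"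
    by (simp add: sum_distrib_left sum_distrib_right mult_ac)
  also have "\<dots> = \<rho> * (\<Sum>i<m. p i * ((c i)\<^sup>2 / a i) * (\<rho> * a i))"
    using eig by simp
  also have "\<dots> = \<rho>\<^sup>2 * Nq m p c"
    unfolding Nq_def using apos by (simp add: sum_distrib_left power2_eq_square) (intro sum.cong, auto simp: field_simps)
  finally show ?thesis .
qed


lemma qT_Suc: "(qT n m p k \<beta> ^^ Suc t) c j = (\<Sum>i<m. (qT n m p k \<beta> ^^ t) c i * Qe n p k \<beta> i j)"
  by (simp only: funpow.simps comp_def) (rule qT_def)

theorem lemma4p5:
  fixes m n t :: nat and p :: "nat \<Rightarrow> real" and k :: "nat \<Rightarrow> nat \<Rightarrow> real"
    and \<beta> \<rho> :: real and blk :: "nat \<Rightarrow> nat" and \<sigma> \<sigma>' :: "nat \<Rightarrow> int" and a :: "real vec"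
  assumes "m \<ge> 1"
    and "\<forall>i<m. p i > 0" and "(\<Sum>i<m. p i) = 1"
    and "\<forall>i<m. \<forall>j<m. k i j = k j i" and "\<forall>i<m. \<forall>j<m. k i j > 0"
    and "\<beta> \<ge> 0" and "n \<ge> 1"
    and "\<forall>v\<in>{1..n}. blk v < m"
    and "\<forall>i<m. real (card {v\<in>{1..n}. blk v = i}) = real n * p i"
    and "\<forall>v\<in>{1..n}. \<sigma> v \<in> {-1, 1}" and "\<forall>v\<in>{1..n}. \<sigma>' v \<in> {-1, 1}"
    and "eigenvalue (Qmat m n p k \<beta>) \<rho>"
    and "\<forall>\<mu>. eigenvalue (Qmat m n p k \<beta>) \<mu> \<longrightarrow> \<mu> \<le> \<rho>"
    and "a \<in> carrier_vec m" and "\<forall>i<m. a $ i > 0" and "(\<Sum>i<m. \<bar>a $ i\<bar>) = 1"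
    and "transpose_mat (Qmat m n p k \<beta>) *\<^sub>v a = \<rho> \<cdot>\<^sub>v a"
  shows "coup_E n blk k \<beta> t (\<lambda>s s'. \<Sum>i<m. a $ i * real (blk_dist n blk i s s')) \<sigma> \<sigma>'
           \<le> \<rho> ^ t * (\<Sum>i<m. a $ i * real (blk_dist n blk i \<sigma> \<sigma>'))
         \<and> (\<forall>i<m. coup_E n blk k \<beta> t (\<lambda>s s'. real (blk_dist n blk i s s')) \<sigma> \<sigma>'
                    \<le> real n * sqrt (p i) * \<rho> ^ t)"
proof -
  note pp = assms(2) and kpos = assms(5) and card = assms(9)
  let ?Q = "Qe n p k \<beta>"
  let ?A = "\<lambda>i. a $ i"
  have vs: "valid n \<sigma>" "valid n \<sigma>'" using assms(10,11) by (auto simp: valid_def)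
  have eig: "\<forall>j<m. (\<Sum>i<m. ?A i * ?Q i j) = \<rho> * ?A j"
    using eig_extract[OF assms(14,17)] by blast
  have Qn: "\<forall>i<m. \<forall>j<m. ?Q i j \<ge> 0" using Qe_nonneg assms(6,7) pp kpos by blast
  have sym: "\<forall>i<m. \<forall>j<m. p j * ?Q i j = p i * ?Q j i"
    using assms(4) by (auto simp: Qe_def algebra_simps)
  have apos: "\<forall>i<m. ?A i > 0" using assms(15) by blast
  have rho: "\<rho> \<ge> 0"
  proof -
    have "0 \<le> (\<Sum>i<m. ?A i * ?Q i 0)" using apos Qn assms(1) by (intro sum_nonneg mult_nonneg_nonneg) (auto simp: less_imp_le)
    then have "0 \<le> \<rho> * ?A 0" using eig assms(1) by simp
    moreover have "?A 0 > 0" using apos assms(1) by simp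
    ultimately show ?thesis by (simp add: zero_le_mult_iff)
  qed
  have powA: "\<forall>j<m. (qT n m p k \<beta> ^^ t) ?A j = \<rho> ^ t * ?A j"
  proof (induction t)
    case 0 then show ?case by simp
  next
    case (Suc t)
    show ?case
    proof (intro allI impI)
      fix j assume j: "j < m"
      have "(qT n m p k \<beta> ^^ Suc t) ?A j = (\<Sum>i<m. (\<rho> ^ t * ?A i) * ?Q i j)"
        unfolding qT_Suc using Suc by (intro sum.cong) auto
      also have "\<dots> = \<rho> ^ t * (\<Sum>i<m. ?A i * ?Q i j)" by (simp add: sum_distrib_left mult_ac)
      also have "\<dots> = \<rho> ^ Suc t * ?A j" using eig j by simp
      finally show "(qT n m p k \<beta> ^^ Suc t) ?A j = \<rho> ^ Suc t * ?A j" .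
    qed
  qed
  have part1: "coup_E n blk k \<beta> t (\<lambda>s s'. \<Sum>i<m. a $ i * real (blk_dist n blk i s s')) \<sigma> \<sigma>'
           \<le> \<rho> ^ t * (\<Sum>i<m. a $ i * real (blk_dist n blk i \<sigma> \<sigma>'))"
  proof -
    have e: "(\<lambda>s s'. \<Sum>i<m. a $ i * real (blk_dist n blk i s s')) = fc n blk m ?A"
      by (simp add: fc_def fun_eq_iff)
    have "coup_E n blk k \<beta> t (fc n blk m ?A) \<sigma> \<sigma>' \<le> fc n blk m ((qT n m p k \<beta> ^^ t) ?A) \<sigma> \<sigma>'"
      by (rule main_ind[OF assms(7,8,5,6) card pp _ vs]) (use apos in \<open>auto simp: less_imp_le\<close>)
    also have "\<dots> = \<rho> ^ t * (\<Sum>i<m. a $ i * real (blk_dist n blk i \<sigma> \<sigma>'))"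
      unfolding fc_def using powA by (simp add: sum_distrib_left mult_ac)
    finally show ?thesis unfolding e .
  qed
  have part2: "coup_E n blk k \<beta> t (\<lambda>s s'. real (blk_dist n blk i s s')) \<sigma> \<sigma>'
                    \<le> real n * sqrt (p i) * \<rho> ^ t" if i: "i < m" for i
  proof -
    define e where "e = (\<lambda>j. if j = i then 1 else 0 :: real)"
    define ct where "ct = (qT n m p k \<beta> ^^ t) e"
    have enn: "\<forall>j<m. e j \<ge> 0" by (simp add: e_def)
    have ctn: "\<forall>j<m. ct j \<ge> 0" unfolding ct_def
      by (rule qT_pow_nonneg[OF assms(7,6) pp kpos enn])
    have fe: "(\<lambda>s s'. real (blk_dist n blk i s s')) = fc n blk m e"
    proof (intro ext)
      fix s s'
      have "(\<Sum>j<m. e j * real (blk_dist n blk j s s')) = (\<Sum>j<m. if j = i then real (blk_dist n blk j s s') else 0)"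
        by (intro sum.cong) (auto simp: e_def)
      then show "real (blk_dist n blk i s s') = fc n blk m e s s'"
        using i by (simp add: fc_def)
    qed
    have "coup_E n blk k \<beta> t (fc n blk m e) \<sigma> \<sigma>' \<le> fc n blk m ct \<sigma> \<sigma>'"
      unfolding ct_def by (rule main_ind[OF assms(7,8,5,6) card pp enn vs])
    also have "\<dots> \<le> (\<Sum>j<m. ct j * (real n * p j))"
      unfolding fc_def
    proof (intro sum_mono mult_left_mono)
      fix j assume j: "j \<in> {..<m}"
      have "blk_dist n blk j \<sigma> \<sigma>' \<le> card {v\<in>{1..n}. blk v = j}"
        unfolding blk_dist_def by (rule card_mono) auto
      then show "real (blk_dist n blk j \<sigma> \<sigma>') \<le> real n * p j" using card j by force
      show "0 \<le> ct j" using ctn j by simp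
    qed
    also have "\<dots> = real n * (\<Sum>j<m. p j * ct j)" by (simp add: sum_distrib_left mult_ac)
    also have "(\<Sum>j<m. p j * ct j) \<le> sqrt (Nq m p ct)"
    proof (rule real_le_rsqrt)
      have "(\<Sum>j<m. p j * ct j)\<^sup>2 \<le> (\<Sum>j<m. p j) * (\<Sum>j<m. p j * (ct j)\<^sup>2)"
        by (rule wcs) (use pp in \<open>auto simp: less_imp_le\<close>)
      then show "(\<Sum>j<m. p j * ct j)\<^sup>2 \<le> Nq m p ct" using assms(3) by (simp add: Nq_def)
    qed
    also have "Nq m p ct \<le> (\<rho>\<^sup>2) ^ t * Nq m p e"
      unfolding ct_def
    proof (induction t)
      case 0 then show ?case by simp
    next
      case (Suc t)
      have "Nq m p ((qT n m p k \<beta> ^^ Suc t) e) \<le> \<rho>\<^sup>2 * Nq m p ((qT n m p k \<beta> ^^ t) e)"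
        by (simp add: N_qT[OF eig sym Qn apos pp rho])
      also have "\<dots> \<le> \<rho>\<^sup>2 * ((\<rho>\<^sup>2) ^ t * Nq m p e)"
        using Suc by (intro mult_left_mono) auto
      finally show ?case by simp
    qed
    also have "Nq m p e = p i"
    proof -
      have "Nq m p e = (\<Sum>j<m. if j = i then p j else 0)"
        unfolding Nq_def e_def by (intro sum.cong) auto
      then show ?thesis using i by simp
    qed
    finally have "coup_E n blk k \<beta> t (fc n blk m e) \<sigma> \<sigma>' \<le> real n * sqrt ((\<rho>\<^sup>2) ^ t * p i)"
      by (simp add: mult_left_mono)
    also have "sqrt ((\<rho>\<^sup>2) ^ t * p i) = \<rho> ^ t * sqrt (p i)"
    proof -
      have "(\<rho>\<^sup>2) ^ t = (\<rho> ^ t)\<^sup>2" by (metis power_mult mult.commute)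
      then show ?thesis using rho by (simp add: real_sqrt_mult)
    qed
    finally show ?thesis unfolding fe by (simp add: mult_ac)
  qed
  show ?thesis using part1 part2 by blast
qed

end
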